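(* Let $(E,\rho)$ be a complete partial $v$-generalized metric space and let $S:E\to E$ satisfy $\rho(Su,Sw)\le\lambda\rho(u,w)$ for all $u,w\in E$, where $\lambda\in[0,1)$. Then $S$ has a unique fixed point $b\in E$, and $\rho(b,b)=0$.
   Context: Let $E$ be a nonempty set and $v\in\mathbb{N}$. $(E,\rho)$, with $\rho:E\times E\to[0,\infty)$, is a partial $v$-generalized metric space if for all $u,w,z_1,\dots,z_v\in E$: (1) $u=w$ iff $\rho(u,u)=\rho(u,w)=\rho(w,w)$; (2) $\rho(u,u)\le\rho(u,w)$; (3) $\rho(u,w)=\rho(w,u)$; (4) $\rho(u,w)\le\rho(u,z_1)+\rho(z_1,z_2)+\dots+\rho(z_{v-1},z_v)+\rho(z_v,w)-\sum_{i=1}^v\rho(z_i,z_i)$. A sequence $\{u_n\}$ in $E$ converges to $u\in E$ if $\lim_{n\to\infty}\rho(u_n,u)=\rho(u,u)$; it is Cauchy if $\lim_{n,m\to\infty}\rho(u_n,u_m)$ exists and is finite. $(E,\rho)$ is complete if for every Cauchy sequence $\{u_n\}$ there is $u\in E$ with $\lim_{n,m\to\infty}\rho(u_n,u_m)=\lim_{n\to\infty}\rho(u_n,u)=\rho(u,u)$. *)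

theory Defs
  imports "HOL-Analysis.Analysis"
begin

text \<open>Partial v-generalized metric space on carrier E (v \<in> \<nat>, taken as v \<ge> 1).
  The intermediate points z_1..z_v are given by a function z restricted to {1..v}.\<close>
definition partial_v_gen_metric :: "nat \<Rightarrow> 'a set \<Rightarrow> ('a \<Rightarrow> 'a \<Rightarrow> real) \<Rightarrow> bool" where
  "partial_v_gen_metric v E \<rho> \<longleftrightarrow>
     E \<noteq> {} \<and> v \<ge> 1 \<and>
     (\<forall>u\<in>E. \<forall>w\<in>E. \<rho> u w \<ge> 0) \<and>
     (\<forall>u\<in>E. \<forall>w\<in>E. u = w \<longleftrightarrow> (\<rho> u u = \<rho> u w \<and> \<rho> u w = \<rho> w w)) \<and>
     (\<forall>u\<in>E. \<forall>w\<in>E. \<rho> u u \<le> \<rho> u w) \<and>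
     (\<forall>u\<in>E. \<forall>w\<in>E. \<rho> u w = \<rho> w u) \<and>
     (\<forall>u\<in>E. \<forall>w\<in>E. \<forall>z. (\<forall>i\<in>{1..v}. z i \<in> E) \<longrightarrow>
        \<rho> u w \<le> \<rho> u (z 1) + (\<Sum>i=1..<v. \<rho> (z i) (z (Suc i))) + \<rho> (z v) w
                  - (\<Sum>i=1..v. \<rho> (z i) (z i)))"

definition pvgm_converges :: "('a \<Rightarrow> 'a \<Rightarrow> real) \<Rightarrow> (nat \<Rightarrow> 'a) \<Rightarrow> 'a \<Rightarrow> bool" where
  "pvgm_converges \<rho> s u \<longleftrightarrow> ((\<lambda>n. \<rho> (s n) u) \<longlongrightarrow> \<rho> u u) sequentially"

definition pvgm_cauchy :: "('a \<Rightarrow> 'a \<Rightarrow> real) \<Rightarrow> (nat \<Rightarrow> 'a) \<Rightarrow> bool" where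
  "pvgm_cauchy \<rho> s \<longleftrightarrow>
     (\<exists>L::real. ((\<lambda>(n, m). \<rho> (s n) (s m)) \<longlongrightarrow> L) (sequentially \<times>\<^sub>F sequentially))"

definition pvgm_complete :: "'a set \<Rightarrow> ('a \<Rightarrow> 'a \<Rightarrow> real) \<Rightarrow> bool" where
  "pvgm_complete E \<rho> \<longleftrightarrow>
     (\<forall>s. (\<forall>n. s n \<in> E) \<longrightarrow> pvgm_cauchy \<rho> s \<longrightarrow>
        (\<exists>u\<in>E. ((\<lambda>(n, m). \<rho> (s n) (s m)) \<longlongrightarrow> \<rho> u u) (sequentially \<times>\<^sub>F sequentially)
               \<and> ((\<lambda>n. \<rho> (s n) u) \<longlongrightarrow> \<rho> u u) sequentially))"

end

theory Submission
  imports Defs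
begin

lemma pvgm_tri:
  assumes "partial_v_gen_metric v E \<rho>" "u \<in> E" "a \<in> E" "w \<in> E"
  shows "\<rho> u w \<le> \<rho> u a + \<rho> a w - \<rho> a a"
proof -
  from assms(1) have v1: "v \<ge> 1" and T: "\<forall>u\<in>E. \<forall>w\<in>E. \<forall>z. (\<forall>i\<in>{1..v}. z i \<in> E) \<longrightarrow>
        \<rho> u w \<le> \<rho> u (z 1) + (\<Sum>i=1..<v. \<rho> (z i) (z (Suc i))) + \<rho> (z v) w
                  - (\<Sum>i=1..v. \<rho> (z i) (z i))"
    unfolding partial_v_gen_metric_def by auto
  have "\<rho> u w \<le> \<rho> u a + (\<Sum>i=1..<v. \<rho> a a) + \<rho> a w - (\<Sum>i=1..v. \<rho> a a)"
  proof -
    have "\<forall>i\<in>{1..v}. (\<lambda>_. a) i \<in> E" using assms(3) by simp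
    then show ?thesis using T assms(2,4) by fastforce
  qed
  also have "\<dots> = \<rho> u a + \<rho> a w - \<rho> a a"
    using v1 by (simp add: of_nat_diff algebra_simps)
  finally show ?thesis .
qed

lemma geo_bound:
  fixes lam :: real assumes "0 \<le> lam" "lam < 1"
  shows "(\<Sum>i<k. lam^i) \<le> 1 / (1 - lam)"
proof -
  have "(\<Sum>i<k. lam^i) = (1 - lam^k) / (1 - lam)" using assms by (simp add: sum_gp_strict)
  also have "\<dots> \<le> 1 / (1 - lam)" using assms by (intro divide_right_mono) auto
  finally show ?thesis .
qed

theorem mainTheorem5:
  fixes E :: "'a set" and \<rho> :: "'a \<Rightarrow> 'a \<Rightarrow> real" and S :: "'a \<Rightarrow> 'a"
    and v :: nat and lam :: real
  assumes "partial_v_gen_metric v E \<rho>"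
    and "pvgm_complete E \<rho>"
    and "\<forall>u\<in>E. S u \<in> E"
    and "0 \<le> lam" and "lam < 1"
    and "\<forall>u\<in>E. \<forall>w\<in>E. \<rho> (S u) (S w) \<le> lam * \<rho> u w"
  shows "(\<exists>!b. b \<in> E \<and> S b = b) \<and> (\<forall>b\<in>E. S b = b \<longrightarrow> \<rho> b b = 0)"
proof -
  note M = assms(1)[unfolded partial_v_gen_metric_def]
  have nn: "\<And>u w. u \<in> E \<Longrightarrow> w \<in> E \<Longrightarrow> \<rho> u w \<ge> 0" using M by auto
  have eqI: "\<And>u w. u \<in> E \<Longrightarrow> w \<in> E \<Longrightarrow> \<rho> u u = 0 \<Longrightarrow> \<rho> u w = 0 \<Longrightarrow> \<rho> w w = 0 \<Longrightarrow> u = w"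
    using M by auto
  have sm: "\<And>u w. u \<in> E \<Longrightarrow> w \<in> E \<Longrightarrow> \<rho> u u \<le> \<rho> u w" using M by auto
  have sym: "\<And>u w. u \<in> E \<Longrightarrow> w \<in> E \<Longrightarrow> \<rho> u w = \<rho> w u" using M by auto
  have SE: "\<And>u. u \<in> E \<Longrightarrow> S u \<in> E" using assms(3) by auto
  have con: "\<And>u w. u \<in> E \<Longrightarrow> w \<in> E \<Longrightarrow> \<rho> (S u) (S w) \<le> lam * \<rho> u w" using assms(6) by auto
  have fix0: "\<rho> b b = 0" if "b \<in> E" "S b = b" for b
  proof -
    have "\<rho> b b \<le> lam * \<rho> b b" using con[OF that(1) that(1)] that(2) by simp
    then have "(1 - lam) * \<rho> b b \<le> 0" by (simp add: algebra_simps)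
    moreover have "1 - lam > 0" using assms(5) by simp
    ultimately show ?thesis using nn[OF that(1) that(1)]
      by (smt (verit) mult_pos_pos)
  qed
  have uniq: "a = b" if "a \<in> E" "S a = a" "b \<in> E" "S b = b" for a b
  proof -
    have "\<rho> a b \<le> lam * \<rho> a b" using con[OF that(1) that(3)] that by simp
    then have "(1 - lam) * \<rho> a b \<le> 0" by (simp add: algebra_simps)
    moreover have "1 - lam > 0" using assms(5) by simp
    ultimately have "\<rho> a b = 0" using nn[OF that(1) that(3)]
      by (smt (verit) mult_pos_pos)
    then show ?thesis using eqI that fix0 by blast
  qed
  obtain x0 where x0: "x0 \<in> E" using M by auto
  define x where "x n = (S ^^ n) x0" for n
  have xE: "x n \<in> E" for n by (induction n) (auto simp: x_def x0 SE)
  have xS: "x (Suc n) = S (x n)" for n by (simp add: x_def)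
  define d0 where "d0 = \<rho> x0 (x 1)"
  have step: "\<rho> (x n) (x (Suc n)) \<le> lam ^ n * d0" for n
  proof (induction n)
    case 0 then show ?case by (simp add: d0_def x_def)
  next
    case (Suc n)
    have "\<rho> (x (Suc n)) (x (Suc (Suc n))) \<le> lam * \<rho> (x n) (x (Suc n))"
      using con[OF xE xE] xS by metis
    also have "\<dots> \<le> lam * (lam ^ n * d0)" using Suc assms(4) by (intro mult_left_mono) auto
    finally show ?case by simp
  qed
  have chain: "\<rho> (x n) (x (n + k)) \<le> lam ^ n * d0 * (1 + (\<Sum>i<k. lam^i))" for n k
  proof (induction k)
    case 0
    have "\<rho> (x n) (x n) \<le> \<rho> (x n) (x (Suc n))" using sm xE by blast
    then show ?case using step[of n] by simp
  next
    case (Suc k)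
    have "\<rho> (x n) (x (n + Suc k)) \<le> \<rho> (x n) (x (n+k)) + \<rho> (x (n+k)) (x (Suc (n+k))) - \<rho> (x (n+k)) (x (n+k))"
      using pvgm_tri[OF assms(1) xE xE xE] by simp
    also have "\<dots> \<le> lam ^ n * d0 * (1 + (\<Sum>i<k. lam^i)) + lam^(n+k) * d0"
      using Suc step[of "n+k"] nn[OF xE xE, of "n+k" "n+k"] by linarith
    also have "\<dots> = lam ^ n * d0 * (1 + (\<Sum>i<Suc k. lam^i))"
      by (simp add: algebra_simps power_add)
    finally show ?case .
  qed
  define C where "C = d0 * (1 + 1 / (1 - lam))"
  have d0nn: "d0 \<ge> 0" unfolding d0_def using nn x0 xE by blast
  have bnd0: "\<rho> (x n) (x (n + k)) \<le> lam ^ n * C" for n k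
  proof -
    have "lam ^ n * d0 * (1 + (\<Sum>i<k. lam^i)) \<le> lam ^ n * d0 * (1 + 1 / (1 - lam))"
      using geo_bound[OF assms(4,5), of k] d0nn assms(4)
      by (intro mult_left_mono) auto
    then show ?thesis using chain[of n k] by (simp add: C_def mult.assoc)
  qed
  have bnd: "\<rho> (x n) (x m) \<le> lam ^ N * C" if "n \<ge> N" "m \<ge> N" for n m N
  proof -
    have Cnn: "C \<ge> 0" using d0nn assms(5) by (simp add: C_def)
    have mono: "lam ^ j * C \<le> lam ^ N * C" if "j \<ge> N" for j
      using that assms(4,5) Cnn by (intro mult_right_mono power_decreasing) auto
    show ?thesis
    proof (cases "n \<le> m")
      case True
      then obtain k where "m = n + k" using le_Suc_ex by blast
      then show ?thesis using bnd0[of n k] mono[of n] that by simp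
    next
      case False
      then obtain k where "n = m + k" using le_Suc_ex[of m n] by auto
      then show ?thesis using bnd0[of m k] mono[of m] that sym[OF xE xE, of n m] by simp
    qed
  qed
  have lim0: "(\<lambda>N. lam ^ N * C) \<longlonglongrightarrow> 0"
    using assms(4,5) by (intro tendsto_mult_left_zero LIMSEQ_power_zero) auto
  have cau: "((\<lambda>(n, m). \<rho> (x n) (x m)) \<longlongrightarrow> 0) (sequentially \<times>\<^sub>F sequentially)"
  proof (rule tendstoI)
    fix e :: real assume e: "e > 0"
    from lim0 e obtain N where N: "\<bar>lam ^ N * C\<bar> < e"
      by (auto simp: lim_sequentially dist_real_def)
    show "\<forall>\<^sub>F p in sequentially \<times>\<^sub>F sequentially. dist ((\<lambda>(n, m). \<rho> (x n) (x m)) p) 0 < e"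
      unfolding eventually_prod_sequentially
    proof (intro exI allI impI)
      fix m n assume "m \<ge> N" "n \<ge> N"
      then show "dist ((\<lambda>(n, m). \<rho> (x n) (x m)) (n, m)) 0 < e"
        using bnd[of N n m] nn[OF xE xE, of n m] N by (simp add: dist_real_def)
    qed
  qed
  then have "pvgm_cauchy \<rho> x" unfolding pvgm_cauchy_def by blast
  then obtain u where uE: "u \<in> E"
    and u1: "((\<lambda>(n, m). \<rho> (x n) (x m)) \<longlongrightarrow> \<rho> u u) (sequentially \<times>\<^sub>F sequentially)"
    and u2: "(\<lambda>n. \<rho> (x n) u) \<longlonglongrightarrow> \<rho> u u"
    using assms(2) xE unfolding pvgm_complete_def by blast
  have uu: "\<rho> u u = 0" using tendsto_unique[OF _ u1 cau] by (simp add: prod_filter_eq_bot)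
  have lim1: "(\<lambda>n. lam * \<rho> (x n) u + \<rho> (x (Suc n)) u) \<longlonglongrightarrow> 0"
  proof -
    have "(\<lambda>n. lam * \<rho> (x n) u + \<rho> (x (Suc n)) u) \<longlonglongrightarrow> lam * 0 + 0"
      using u2 uu LIMSEQ_Suc[OF u2] by (intro tendsto_intros) auto
    then show ?thesis by simp
  qed
  have Su: "\<rho> (S u) u \<le> lam * \<rho> (x n) u + \<rho> (x (Suc n)) u" for n
  proof -
    have "\<rho> (S u) u \<le> \<rho> (S u) (x (Suc n)) + \<rho> (x (Suc n)) u - \<rho> (x (Suc n)) (x (Suc n))"
      using pvgm_tri[OF assms(1) SE[OF uE] xE uE] by blast
    also have "\<dots> \<le> \<rho> (S u) (x (Suc n)) + \<rho> (x (Suc n)) u" using nn xE by smt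
    also have "\<rho> (S u) (x (Suc n)) \<le> lam * \<rho> (x n) u"
      using con[OF uE xE, of n] xS sym[OF uE xE, of n] by simp
    finally show ?thesis by simp
  qed
  have "\<rho> (S u) u \<le> 0"
    using Su lim1 by (intro LIMSEQ_le_const) auto
  then have Suu: "\<rho> (S u) u = 0" using nn[OF SE[OF uE] uE] by simp
  have "\<rho> (S u) (S u) = 0" using sm[OF SE[OF uE] uE] Suu nn[OF SE[OF uE] SE[OF uE]] by simp
  then have "S u = u" using eqI[OF SE[OF uE] uE] Suu uu by simp
  then show ?thesis using uniq fix0 uE by blast
qed

end
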